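(* For every simple graph $\Gamma$ on $[n]$ and every $m\in\mathbb{N}$, the weighted integer points enumerator of the $m$-graph polytope equals the image of the $1$-uniform decorated graph under the universal morphism: $F_q(Q_{\Gamma,m})=\Psi^m_q(\Gamma^{\mathbf 1})$.
   Context: Let $\Gamma=([n],E)$ be a simple graph and $m\in\mathbb{N}$. For $S\subseteq[n]$ let $\Delta_S=\mathrm{conv}\{e_s: s\in S\}$. Let $\mathsf{H}_m(\Gamma)=\{S\subseteq[n]: |S|\le m+1,\ \Gamma|_S \text{ connected}\}$ and define the $m$-graph polytope $Q_{\Gamma,m}=\sum_{S\in\mathsf{H}_m(\Gamma)}\Delta_S$. Faces of the permutohedron $Pe^{n-1}$ are identified with flags $\mathcal{F}:\emptyset=F_0\subset F_1\subset\cdots\subset F_k=[n]$; $M_\mathcal{F}$ denotes the monomial quasisymmetric function $M_{\alpha}$ with $\alpha=(|F_1|-|F_0|,\ldots,|F_k|-|F_{k-1}|)$, and $L(Pe^{n-1})$ the set of all such flags. For a hypergraph $\mathsf{H}$ on $[n]$, restriction is $\mathsf{H}|_F=\{H\in\mathsf{H}: H\subseteq F\}$, contraction is $\mathsf{H}/F=\{H\setminus F: H\in\mathsf{H}\}$, $\mathsf{H}/\mathcal{F}=\bigsqcup_{i=1}^k(\mathsf{H}|_{F_i})/F_{i-1}$, and $\mathsf{rk}(\mathsf{H}/\mathcal{F})=n-c(\mathsf{H}/\mathcal{F})$ with $c$ the number of connected components. The weighted integer points enumerator is $F_q(Q_{\mathsf{H}})=\sum_{\mathcal{F}\in L(Pe^{n-1})}q^{\mathsf{rk}(\mathsf{H}/\mathcal{F})}M_\mathcal{F}$,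 and $F_q(Q_{\Gamma,m})=F_q(Q_{\mathsf{H}_m(\Gamma)})$. A decorated graph $\Gamma^w=([n],E,w)$ has edge decoration $w:E\to\mathbb{N}$; $\Gamma^{\mathbf 1}$ is the decorated graph with $w\equiv 1$. The ripping $\Gamma^w|_S$ is the induced decorated subgraph on $S$; the sewing $\Gamma^w/S$ is the induced subgraph on $[n]\setminus S$ together with additional edges $uv$ for all $u,v\in[n]\setminus S$ joined by an edge path whose interior vertices lie in $S$, decorated by the minimal sum of decorations over such paths. $\mathrm{pr}_m$ deletes all edges with decoration greater than $m$. The graded Hopf algebra $\mathcal{G}^{W,m}$ on isomorphism classes of decorated graphs has product disjoint union and coproduct $\Delta_m(\Gamma^w)=\sum_{S\subseteq[n]}\mathrm{pr}_m(\Gamma^w|_S)\otimes\mathrm{pr}_m(\Gamma^w/S)$; with character $\zeta_q(\Gamma^w)=q^{n-c(\Gamma^w)}$ it is a combinatorial Hopf algebra, and $\Psi^m_q:(\mathcal{G}^{W,m},\zeta_q)\to(\mathcal{Q}Sym,\zeta)$ is the unique morphism of combinatorial Hopf algebras (Aguiar–Bergeron–Sottile). Explicitly, $\Psi^m_q(\Gamma^w)=\sum_{\mathcal{F}\in L(Pe^{n-1})}q^{\mathsf{rk}_m(\Gamma^w/\mathcal{F})}M_\mathcal{F}$, where $\mathsf{rk}_m(\Gamma^w/\mathcal{F})=n-\sum_{i=1}^k c(\mathrm{pr}_m(\Gamma^w|_{F_i}/F_{i-1}))$. *)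

theory Defs
  imports "HOL-Computational_Algebra.Polynomial"
begin

text \<open>Adjacency relation of a hypergraph with vertex set V and hyperedges H:
  two vertices are related if they lie in a common hyperedge.
  A graph is the special case where all hyperedges are 2-sets.\<close>
definition hrel :: "nat set \<Rightarrow> nat set set \<Rightarrow> (nat \<times> nat) set" where
  "hrel V H = {(x, y). x \<in> V \<and> y \<in> V \<and> (\<exists>h\<in>H. x \<in> h \<and> y \<in> h)}"

definition ncomp :: "nat set \<Rightarrow> nat set set \<Rightarrow> nat" where
  "ncomp V H = card (V // ((hrel V H)\<^sup>*))"

text \<open>A flag \<emptyset> = F0 \<subset> F1 \<subset> ... \<subset> Fk = [n] is represented by the list [F1,...,Fk].\<close>
definition flags :: "nat \<Rightarrow> nat set list set" where
  "flags n = {Fs. sorted_wrt (\<subset>) ({} # Fs) \<and> last ({} # Fs) = {1..n}}"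

definition flag_comp :: "nat set list \<Rightarrow> nat list" where
  "flag_comp Fs = map (\<lambda>i. card (Fs ! i) - card (({} # Fs) ! i)) [0..<length Fs]"

text \<open>A quasisymmetric function with coefficients in Z[q] is represented by its
  coefficient function in the monomial basis M_alpha (alpha a composition).
  qsym_of n r is the element  sum over flags F of q^(r F) M_F.\<close>
type_synonym qsym = "nat list \<Rightarrow> int poly"

definition qsym_of :: "nat \<Rightarrow> (nat set list \<Rightarrow> nat) \<Rightarrow> qsym" where
  "qsym_of n r = (\<lambda>\<alpha>. \<Sum>Fs\<in>{Fs\<in>flags n. flag_comp Fs = \<alpha>}. monom 1 (r Fs))"

definition hyp_rk :: "nat \<Rightarrow> nat set set \<Rightarrow> nat set list \<Rightarrow> nat" where
  "hyp_rk n H Fs = n - (\<Sum>i<length Fs.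
      ncomp (Fs ! i - ({} # Fs) ! i) {h - ({} # Fs) ! i | h. h \<in> H \<and> h \<subseteq> Fs ! i})"

definition Fq_hyp :: "nat \<Rightarrow> nat set set \<Rightarrow> qsym" where
  "Fq_hyp n H = qsym_of n (hyp_rk n H)"

definition simple_graph :: "nat \<Rightarrow> nat set set \<Rightarrow> bool" where
  "simple_graph n E \<longleftrightarrow> (\<forall>e\<in>E. e \<subseteq> {1..n} \<and> card e = 2)"

definition Hm :: "nat \<Rightarrow> nat set set \<Rightarrow> nat \<Rightarrow> nat set set" where
  "Hm n E m = {S. S \<subseteq> {1..n} \<and> card S \<le> m + 1 \<and>
                  ncomp S {e\<in>E. e \<subseteq> S} = 1}"

type_synonym dgraph = "nat set \<times> nat set set \<times> (nat set \<Rightarrow> nat)"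

definition rip :: "dgraph \<Rightarrow> nat set \<Rightarrow> dgraph" where
  "rip G S = (case G of (V, E, w) \<Rightarrow> (S, {e\<in>E. e \<subseteq> S}, w))"

definition sew_walk :: "nat set set \<Rightarrow> nat set \<Rightarrow> nat \<Rightarrow> nat \<Rightarrow> nat list \<Rightarrow> bool" where
  "sew_walk E S u v ps \<longleftrightarrow> length ps \<ge> 2 \<and> hd ps = u \<and> last ps = v \<and>
     (\<forall>i < length ps - 1. {ps ! i, ps ! Suc i} \<in> E) \<and> set (butlast (tl ps)) \<subseteq> S"

definition walk_weight :: "(nat set \<Rightarrow> nat) \<Rightarrow> nat list \<Rightarrow> nat" where
  "walk_weight w ps = (\<Sum>i < length ps - 1. w {ps ! i, ps ! Suc i})"

definition sew :: "dgraph \<Rightarrow> nat set \<Rightarrow> dgraph" where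
  "sew G S = (case G of (V, E, w) \<Rightarrow>
     (V - S,
      {{u, v} | u v. u \<in> V - S \<and> v \<in> V - S \<and> u \<noteq> v \<and> (\<exists>ps. sew_walk E S u v ps)},
      (\<lambda>e. LEAST s. \<exists>u v ps. e = {u, v} \<and> u \<in> V - S \<and> v \<in> V - S \<and> u \<noteq> v \<and>
                 sew_walk E S u v ps \<and> s = walk_weight w ps)))"

definition pr :: "nat \<Rightarrow> dgraph \<Rightarrow> dgraph" where
  "pr m G = (case G of (V, E, w) \<Rightarrow> (V, {e\<in>E. w e \<le> m}, w))"

definition dcomp :: "dgraph \<Rightarrow> nat" where
  "dcomp G = (case G of (V, E, w) \<Rightarrow> ncomp V E)"

definition rk_m :: "nat \<Rightarrow> nat \<Rightarrow> dgraph \<Rightarrow> nat set list \<Rightarrow> nat" where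
  "rk_m m n G Fs = n - (\<Sum>i<length Fs. dcomp (pr m (sew (rip G (Fs ! i)) (({} # Fs) ! i))))"

definition Psi :: "nat \<Rightarrow> nat \<Rightarrow> dgraph \<Rightarrow> qsym" where
  "Psi m n G = qsym_of n (rk_m m n G)"

definition one_dec :: "nat \<Rightarrow> nat set set \<Rightarrow> dgraph" where
  "one_dec n E = ({1..n}, E, (\<lambda>_. 1))"

end

theory Submission
  imports Defs
begin

definition GG :: "nat set set \<Rightarrow> nat set \<Rightarrow> nat set \<Rightarrow> nat \<Rightarrow> nat set set" where
 "GG E T S m = {e. \<exists>u v ps. e = {u,v} \<and> u \<in> T - S \<and> v \<in> T - S \<and> u \<noteq> v \<and>
     sew_walk {e\<in>E. e \<subseteq> T} S u v ps \<and> length ps \<le> m + 1}"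

lemma ww1: "walk_weight (\<lambda>_. 1) ps = length ps - 1"
  by (simp add: walk_weight_def)

lemma GGI:
  assumes "u \<in> T - S" "v \<in> T - S" "u \<noteq> v" "sew_walk {e\<in>E. e\<subseteq>T} S u v ps" "length ps \<le> m + 1"
  shows "{u,v} \<in> GG E T S m"
  unfolding GG_def mem_Collect_eq
  by (rule exI[of _ u], rule exI[of _ v], rule exI[of _ ps]) (use assms in auto)

lemma graph_side:
  "dcomp (pr m (sew (rip (one_dec n E) T) S)) = ncomp (T - S) (GG E T S m)"
proof -
  let ?P = "\<lambda>e s. \<exists>u v ps. e = {u, v} \<and> u \<in> T - S \<and> v \<in> T - S \<and> u \<noteq> v \<and>
                 sew_walk {e\<in>E. e \<subseteq> T} S u v ps \<and> s = walk_weight (\<lambda>_. 1) ps"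
  have eq: "{e \<in> {{u, v} | u v. u \<in> T - S \<and> v \<in> T - S \<and> u \<noteq> v \<and> (\<exists>ps. sew_walk {e\<in>E. e \<subseteq> T} S u v ps)}.
     (LEAST s. ?P e s) \<le> m} = GG E T S m"
  proof (intro set_eqI iffI)
    fix e assume "e \<in> {e \<in> {{u, v} | u v. u \<in> T - S \<and> v \<in> T - S \<and> u \<noteq> v \<and> (\<exists>ps. sew_walk {e\<in>E. e \<subseteq> T} S u v ps)}.
     (LEAST s. ?P e s) \<le> m}"
    then have ex: "\<exists>s. ?P e s" and le: "(LEAST s. ?P e s) \<le> m" by auto
    from LeastI_ex[OF ex] obtain u v ps where
      uv: "e = {u, v}" "u \<in> T - S" "v \<in> T - S" "u \<noteq> v" "sew_walk {e\<in>E. e \<subseteq> T} S u v ps"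
      "(LEAST s. ?P e s) = walk_weight (\<lambda>_. 1) ps" by blast
    from le have "walk_weight (\<lambda>_. 1) ps \<le> m" unfolding uv(6) .
    then have "length ps - 1 \<le> m" unfolding ww1 .
    moreover have "2 \<le> length ps" using uv(5) unfolding sew_walk_def by blast
    ultimately have "length ps \<le> m + 1" by linarith
    then show "e \<in> GG E T S m" unfolding uv(1) using uv(2-5) by (intro GGI)
  next
    fix e assume "e \<in> GG E T S m"
    then obtain u v ps where h: "e = {u, v}" "u \<in> T - S" "v \<in> T - S" "u \<noteq> v" "sew_walk {e\<in>E. e \<subseteq> T} S u v ps"
      "length ps \<le> m + 1" unfolding GG_def by blast
    have "?P e (length ps - 1)"
      by (rule exI[of _ u], rule exI[of _ v], rule exI[of _ ps]) (use h in \<open>simp add: walk_weight_def\<close>)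
    then have "(LEAST s. ?P e s) \<le> length ps - 1" by (rule Least_le)
    then have m1: "(LEAST s. ?P e s) \<le> m" using h(6) by linarith
    have m2: "e \<in> {{u, v} | u v. u \<in> T - S \<and> v \<in> T - S \<and> u \<noteq> v \<and> (\<exists>ps. sew_walk {e\<in>E. e \<subseteq> T} S u v ps)}"
      unfolding mem_Collect_eq by (rule exI[of _ u], rule exI[of _ v]) (use h(1-5) in blast)
    show "e \<in> {e \<in> {{u, v} | u v. u \<in> T - S \<and> v \<in> T - S \<and> u \<noteq> v \<and> (\<exists>ps. sew_walk {e\<in>E. e \<subseteq> T} S u v ps)}.
     (LEAST s. ?P e s) \<le> m}"
      by (rule CollectI, rule conjI, rule m2, rule m1)
  qed
  show ?thesis
    unfolding dcomp_def pr_def sew_def rip_def one_dec_def using eq by simp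
qed


lemma walk_conv: "(\<forall>i<length ps - 1. {ps!i, ps!Suc i} \<in> Ed) \<longleftrightarrow> successively (\<lambda>a b. {a,b} \<in> Ed) ps"
  by (auto simp: successively_conv_nth)

lemma walk_in: "successively (\<lambda>a b. {a,b} \<in> Ed) xs \<Longrightarrow> 2 \<le> length xs \<Longrightarrow> set xs \<subseteq> \<Union>Ed"
proof (induction xs rule: induct_list012)
  case (3 x y zs)
  have e: "{x,y} \<in> Ed" using "3.prems"(1) by simp
  have "set (y#zs) \<subseteq> \<Union>Ed"
  proof (cases zs)
    case Nil then show ?thesis using e by auto
  next
    case (Cons z zs')
    have "successively (\<lambda>a b. {a,b} \<in> Ed) (y#zs)" using "3.prems"(1) by simp
    moreover have "2 \<le> length (y#zs)" using Cons by simp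
    ultimately show ?thesis by (rule "3.IH"(2))
  qed
  then show ?case using e by auto
qed simp_all

lemma conn_walk: "successively (\<lambda>a b. {a,b} \<in> E) ps \<Longrightarrow> set ps \<subseteq> V \<Longrightarrow> x \<in> set ps
   \<Longrightarrow> (hd ps, x) \<in> (hrel V {e\<in>E. e\<subseteq>V})\<^sup>*"
proof (induction ps)
  case Nil then show ?case by simp
next
  case (Cons a ps)
  show ?case
  proof (cases "x = a")
    case True then show ?thesis by simp
  next
    case False
    then have x: "x \<in> set ps" using Cons by simp
    then have ne: "ps \<noteq> []" by auto
    then have e: "{a, hd ps} \<in> E" using Cons.prems(1) by (simp add: successively_Cons)
    have "hd ps \<in> V" "a \<in> V" using Cons.prems(2) ne by auto
    with e have "(a, hd ps) \<in> hrel V {e\<in>E. e\<subseteq>V}" unfolding hrel_def by auto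
    moreover have "(hd ps, x) \<in> (hrel V {e\<in>E. e\<subseteq>V})\<^sup>*"
      using Cons.IH Cons.prems ne x by (simp add: successively_Cons)
    ultimately show ?thesis by (simp add: converse_rtrancl_into_rtrancl)
  qed
qed

lemma ncomp_one:
  assumes "a \<in> V" "\<forall>x\<in>V. (a,x) \<in> (hrel V H)\<^sup>*"
  shows "ncomp V H = 1"
proof -
  let ?r = "(hrel V H)\<^sup>*"
  have sy: "sym ?r" by (rule sym_rtrancl) (auto simp: sym_def hrel_def)
  have eqs: "?r `` {x} = ?r `` {a}" if "x \<in> V" for x
  proof -
    have ax: "(a,x) \<in> ?r" using assms that by blast
    then have xa: "(x,a) \<in> ?r" using sy by (meson symD)
    show ?thesis
    proof (rule set_eqI)
      fix z show "z \<in> ?r `` {x} \<longleftrightarrow> z \<in> ?r `` {a}"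
        unfolding Image_singleton_iff using rtrancl_trans[OF ax, of z] rtrancl_trans[OF xa, of z] by blast
    qed
  qed
  have "(\<Union>x\<in>V. {?r `` {x}}) = (\<Union>x\<in>V. {?r `` {a}})"
    by (rule SUP_cong[OF refl]) (simp only: eqs)
  also have "\<dots> = {?r `` {a}}" using assms(1) by blast
  finally have "V // ?r = {?r `` {a}}" unfolding quotient_def .
  then show ?thesis unfolding ncomp_def by simp
qed

lemma ncomp_one_D:
  assumes "ncomp V H = 1" "x \<in> V" "y \<in> V"
  shows "(x,y) \<in> (hrel V H)\<^sup>*"
proof -
  let ?r = "(hrel V H)\<^sup>*"
  from assms(1) obtain C where C: "V // ?r = {C}" unfolding ncomp_def by (meson card_1_singletonE)
  have "?r `` {x} \<in> V // ?r" "?r `` {y} \<in> V // ?r" using assms by (auto intro: quotientI)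
  then have "?r `` {x} = ?r `` {y}" using C by auto
  moreover have "y \<in> ?r `` {y}" by simp
  ultimately show ?thesis by auto
qed

lemma rt_walk:
  assumes "(x,y) \<in> (hrel V Ed)\<^sup>*" "\<forall>e\<in>Ed. card e = 2" "x \<in> V"
  shows "\<exists>ps. ps\<noteq>[] \<and> hd ps = x \<and> last ps = y \<and> set ps \<subseteq> V \<and> successively (\<lambda>a b. {a,b}\<in>Ed) ps"
  using assms(1)
proof (induction rule: rtrancl_induct)
  case base
  then show ?case using assms(3) by (intro exI[of _ "[x]"]) auto
next
  case (step y z)
  then obtain ps where ps: "ps\<noteq>[]" "hd ps = x" "last ps = y" "set ps \<subseteq> V" "successively (\<lambda>a b. {a,b}\<in>Ed) ps"
    by blast
  from step.hyps(2) obtain e where e: "e \<in> Ed" "y \<in> e" "z \<in> e" "z \<in> V" unfolding hrel_def by auto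
  show ?case
  proof (cases "y = z")
    case True then show ?thesis using ps by blast
  next
    case False
    from e assms(2) obtain a b where "e = {a,b}" by (meson card_2_iff)
    with e False have "e = {y,z}" by auto
    with e have "{y,z} \<in> Ed" by simp
    then show ?thesis using ps e
      by (intro exI[of _ "ps @ [z]"]) (auto simp: successively_append_iff)
  qed
qed

lemma distinct_walk:
  "ps\<noteq>[] \<Longrightarrow> successively P ps \<Longrightarrow> \<exists>qs. qs\<noteq>[] \<and> hd qs = hd ps \<and> last qs = last ps \<and>
      set qs \<subseteq> set ps \<and> successively P qs \<and> distinct qs"
proof (induction "length ps" arbitrary: ps rule: less_induct)
  case less
  show ?case
  proof (cases "distinct ps")
    case True then show ?thesis using less.prems by blast
  next
    case False
    then obtain xs y ys zs where d: "ps = xs @ [y] @ ys @ [y] @ zs" using not_distinct_decomp by blast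
    let ?q = "xs @ y # zs"
    have s1: "successively P (xs @ y # (ys @ y # zs))" using less.prems d by simp
    then have a: "successively P xs" "xs = [] \<or> P (last xs) y" "successively P ((y # ys) @ y # zs)"
      by (auto simp: successively_append_iff)
    from a(3) have "successively P (y # zs)" by (simp only: successively_append_iff)
    with a have sq: "successively P ?q" by (auto simp: successively_append_iff)
    have "length ?q < length ps" using d by simp
    from less.hyps[OF this _ sq] obtain qs where
      Q: "qs\<noteq>[] \<and> hd qs = hd ?q \<and> last qs = last ?q \<and> set qs \<subseteq> set ?q \<and> successively P qs \<and> distinct qs"
      by auto
    have h1: "hd ?q = hd ps" using d by (cases xs) auto
    have h2: "last ?q = last ps" using d by (cases zs) auto
    have h3: "set ?q \<subseteq> set ps" using d by auto
    have "qs\<noteq>[] \<and> hd qs = hd ps \<and> last qs = last ps \<and> set qs \<subseteq> set ps \<and> successively P qs \<and> distinct qs"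
      using Q h1 h2 h3 by auto
    then show ?thesis by (rule exI)
  qed
qed


lemma hrelI: "x \<in> V \<Longrightarrow> y \<in> V \<Longrightarrow> h \<in> H \<Longrightarrow> x \<in> h \<Longrightarrow> y \<in> h \<Longrightarrow> (x,y) \<in> hrel V H"
  unfolding hrel_def by blast

lemma hrelD: "(x,y) \<in> hrel V H \<Longrightarrow> x \<in> V \<and> y \<in> V \<and> (\<exists>h\<in>H. x \<in> h \<and> y \<in> h)"
  unfolding hrel_def by blast

lemma edge_step:
  assumes "successively (\<lambda>a b. {a,b} \<in> {e\<in>E. e\<subseteq>T}) (pre @ [a])" "pre \<noteq> []" "hd pre \<notin> S"
    "set (tl pre) \<subseteq> S" "a \<notin> S" "length (pre @ [a]) \<le> m + 1"
  shows "(hd pre, a) \<in> (hrel (T - S) (GG E T S m))\<^sup>*"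
proof (cases "hd pre = a")
  case True then show ?thesis by simp
next
  case False
  have l2: "2 \<le> length (pre @ [a])" using assms(2) by (cases pre) auto
  have "set (pre @ [a]) \<subseteq> \<Union>{e\<in>E. e\<subseteq>T}"
    using walk_in[OF assms(1) l2] .
  then have inT: "set (pre @ [a]) \<subseteq> T" by blast
  have hT: "hd pre \<in> T" "a \<in> T" using inT assms(2) hd_in_set[OF assms(2)] by auto
  have bt: "butlast (tl (pre @ [a])) = tl pre" using assms(2) by (cases pre) auto
  have sw: "sew_walk {e\<in>E. e\<subseteq>T} S (hd pre) a (pre @ [a])"
    unfolding sew_walk_def walk_conv bt using assms(1,2,4) l2 by simp
  have "{hd pre, a} \<in> GG E T S m"
    using hT assms(3,5,6) False sw by (intro GGI) auto
  then have "(hd pre, a) \<in> hrel (T - S) (GG E T S m)"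
    using hT assms(3,5) by (intro hrelI[of _ _ _ "{hd pre, a}"]) auto
  then show ?thesis by simp
qed

lemma seg:
  assumes "successively (\<lambda>a b. {a,b} \<in> {e\<in>E. e\<subseteq>T}) (pre @ ps)" "pre \<noteq> []" "hd pre \<notin> S"
    "set (tl pre) \<subseteq> S" "ps \<noteq> []" "last ps \<notin> S" "length (pre @ ps) \<le> m + 1"
  shows "(hd pre, last ps) \<in> (hrel (T - S) (GG E T S m))\<^sup>*"
  using assms
proof (induction ps arbitrary: pre)
  case Nil then show ?case by simp
next
  case (Cons a ps)
  note P = Cons.prems
  have sa: "successively (\<lambda>a b. {a,b} \<in> {e\<in>E. e\<subseteq>T}) (pre @ [a])"
    using P(1) unfolding successively_append_iff by (auto simp: successively_Cons)
  have lena: "length (pre @ [a]) \<le> m + 1" using P(7) by simp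
  show ?case
  proof (cases "ps = []")
    case True
    then have aS: "a \<notin> S" using P(6) by simp
    have "(hd pre, a) \<in> (hrel (T - S) (GG E T S m))\<^sup>*"
      by (rule edge_step[OF sa P(2) P(3) P(4) aS lena])
    then show ?thesis using True by simp
  next
    case ne: False
    have lps: "last (a # ps) = last ps" using ne by simp
    show ?thesis
    proof (cases "a \<in> S")
      case True
      have s1: "successively (\<lambda>a b. {a,b} \<in> {e\<in>E. e\<subseteq>T}) ((pre @ [a]) @ ps)" using P(1) by simp
      have t1: "set (tl (pre @ [a])) \<subseteq> S" using P(2) P(4) True by (cases pre) auto
      have h1: "hd (pre @ [a]) = hd pre" using P(2) by (cases pre) auto
      have l1: "length ((pre @ [a]) @ ps) \<le> m + 1" using P(7) by simp
      have "(hd (pre @ [a]), last ps) \<in> (hrel (T - S) (GG E T S m))\<^sup>*"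
        using Cons.IH[OF s1 _ _ t1 ne _ l1] P(3) P(6) lps h1 by simp
      then show ?thesis using lps h1 by simp
    next
      case False
      have 1: "(hd pre, a) \<in> (hrel (T - S) (GG E T S m))\<^sup>*"
        by (rule edge_step[OF sa P(2) P(3) P(4) False lena])
      have s2: "successively (\<lambda>a b. {a,b} \<in> {e\<in>E. e\<subseteq>T}) ([a] @ ps)"
        using successively_append_iff[THEN iffD1, OF P(1)] by (simp only: append_Cons append_Nil)
      have l2: "length ([a] @ ps) \<le> m + 1" using P(7) by simp
      have "(hd [a], last ps) \<in> (hrel (T - S) (GG E T S m))\<^sup>*"
        using Cons.IH[OF s2 _ _ _ ne _ l2] False P(6) lps by simp
      then have 2: "(a, last ps) \<in> (hrel (T - S) (GG E T S m))\<^sup>*" by simp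
      from rtrancl_trans[OF 1 2] show ?thesis using lps by simp
    qed
  qed
qed

lemma comp_eq:
  assumes sg: "simple_graph n E"
  shows "ncomp (T - S) {h - S | h. h \<in> Hm n E m \<and> h \<subseteq> T} = ncomp (T - S) (GG E T S m)"
proof -
  let ?HH = "{h - S | h. h \<in> Hm n E m \<and> h \<subseteq> T}"
  let ?Et = "{e\<in>E. e\<subseteq>T}"
  have A: "hrel (T - S) ?HH \<subseteq> (hrel (T - S) (GG E T S m))\<^sup>*"
  proof
    fix p assume p0: "p \<in> hrel (T - S) ?HH"
    obtain x y where pxy: "p = (x,y)" by (cases p)
    have p1: "(x,y) \<in> hrel (T - S) ?HH" using p0 unfolding pxy .
    have hd0: "x \<in> T - S \<and> y \<in> T - S \<and> (\<exists>h'\<in>?HH. x \<in> h' \<and> y \<in> h')" by (rule hrelD[OF p1])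
    have ex: "\<exists>h'\<in>?HH. x \<in> h' \<and> y \<in> h'" using hd0 by (rule conjunct2[THEN conjunct2])
    then obtain h' where h'3: "h' \<in> ?HH" and h'45: "x \<in> h' \<and> y \<in> h'" by (rule bexE)
    have "\<exists>h. h' = h - S \<and> h \<in> Hm n E m \<and> h \<subseteq> T" using h'3 by (simp only: mem_Collect_eq)
    then obtain h where hh0: "h' = h - S \<and> h \<in> Hm n E m \<and> h \<subseteq> T" by (rule exE)
    have hh: "h' = h - S" "h \<in> Hm n E m" "h \<subseteq> T" using hh0 by simp_all
    have h': "x \<in> T - S" "y \<in> T - S" "h' \<in> ?HH" "x \<in> h'" "y \<in> h'" using hd0 h'3 h'45 by simp_all
    have p: "p = (x,y)" "x \<in> T - S" "y \<in> T - S" "h \<in> Hm n E m" "h \<subseteq> T"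
      "x \<in> h" "y \<in> h" using pxy h' hh by auto
    from p(4) have hn: "h \<subseteq> {1..n}" "card h \<le> m + 1" "ncomp h {e\<in>E. e \<subseteq> h} = 1"
      unfolding Hm_def by auto
    have fin: "finite h" using hn(1) finite_subset by blast
    have xy: "(x,y) \<in> (hrel h {e\<in>E. e \<subseteq> h})\<^sup>*" using ncomp_one_D[OF hn(3) p(6,7)] .
    have c2: "\<forall>e\<in>{e\<in>E. e \<subseteq> h}. card e = 2" using sg unfolding simple_graph_def by auto
    obtain ps where ps: "ps\<noteq>[]" "hd ps = x" "last ps = y" "set ps \<subseteq> h"
      "successively (\<lambda>a b. {a,b}\<in>{e\<in>E. e \<subseteq> h}) ps"
      using rt_walk[OF xy c2 p(6)] by blast
    obtain qs where q0: "qs\<noteq>[]" "hd qs = hd ps" "last qs = last ps"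
      "set qs \<subseteq> set ps" "successively (\<lambda>a b. {a,b}\<in>{e\<in>E. e \<subseteq> h}) qs" "distinct qs"
      using distinct_walk[OF ps(1,5)] by blast
    have qs: "qs\<noteq>[]" "hd qs = x" "last qs = y"
      "set qs \<subseteq> h" "successively (\<lambda>a b. {a,b}\<in>{e\<in>E. e \<subseteq> h}) qs" "distinct qs"
      using q0 ps by auto
    have "length qs = card (set qs)" using qs(6) by (simp add: distinct_card)
    also have "\<dots> \<le> card h" using qs(4) fin by (rule card_mono[rotated])
    finally have len: "length qs \<le> m + 1" using hn(2) by simp
    have sq: "successively (\<lambda>a b. {a,b}\<in>?Et) qs"
      using qs(5) by (rule successively_mono) (use p(5) in auto)
    obtain r where qr: "qs = x # r" using qs(1,2) by (cases qs) auto
    show "p \<in> (hrel (T - S) (GG E T S m))\<^sup>*"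
    proof (cases "r = []")
      case True
      then have "x = y" using qs(3) qr by simp
      then show ?thesis using p by simp
    next
      case False
      have ly: "last r = y" using qs(3) qr False by simp
      have "(hd [x], last r) \<in> (hrel (T - S) (GG E T S m))\<^sup>*"
      proof (rule seg)
        show "successively (\<lambda>a b. {a,b} \<in> ?Et) ([x] @ r)" using sq qr by simp
        show "length ([x] @ r) \<le> m + 1" using len qr by simp
        show "last r \<notin> S" using ly p(3) by simp
      qed (use False p(2) in auto)
      then show ?thesis using p ly by simp
    qed
  qed
  have B: "hrel (T - S) (GG E T S m) \<subseteq> (hrel (T - S) ?HH)\<^sup>*"
  proof
    fix p assume p0: "p \<in> hrel (T - S) (GG E T S m)"
    obtain x y where pxy: "p = (x,y)" by (cases p)
    have p1: "(x,y) \<in> hrel (T - S) (GG E T S m)" using p0 unfolding pxy .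
    have hd0: "x \<in> T - S \<and> y \<in> T - S \<and> (\<exists>e\<in>GG E T S m. x \<in> e \<and> y \<in> e)" by (rule hrelD[OF p1])
    have ex: "\<exists>e\<in>GG E T S m. x \<in> e \<and> y \<in> e" using hd0 by (rule conjunct2[THEN conjunct2])
    then obtain e where e1: "e \<in> GG E T S m" and e2: "x \<in> e \<and> y \<in> e" by (rule bexE)
    have p: "p = (x,y)" "x \<in> T - S" "y \<in> T - S" "e \<in> GG E T S m" "x \<in> e" "y \<in> e"
      using pxy hd0 e1 e2 by simp_all
    have "\<exists>u v ps. e = {u, v} \<and> u \<in> T - S \<and> v \<in> T - S \<and> u \<noteq> v \<and>
     sew_walk ?Et S u v ps \<and> length ps \<le> m + 1" using e1 unfolding GG_def mem_Collect_eq .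
    then obtain u v ps where e0: "e = {u, v} \<and> u \<in> T - S \<and> v \<in> T - S \<and> u \<noteq> v \<and>
     sew_walk ?Et S u v ps \<and> length ps \<le> m + 1" by blast
    have e: "e = {u,v}" "sew_walk ?Et S u v ps" "length ps \<le> m + 1" using e0 by simp_all
    from e(2) have w: "2 \<le> length ps" "hd ps = u" "last ps = v" "successively (\<lambda>a b. {a,b}\<in>?Et) ps"
      unfolding sew_walk_def walk_conv by auto
    have "set ps \<subseteq> \<Union>?Et" using walk_in[OF w(4,1)] .
    then have sT: "set ps \<subseteq> T" "set ps \<subseteq> {1..n}" using sg unfolding simple_graph_def by auto
    have ne: "ps \<noteq> []" using w(1) by auto
    have uv: "u \<in> set ps" "v \<in> set ps" using w ne by auto
    have sE: "successively (\<lambda>a b. {a,b}\<in>E) ps" using w(4) by (rule successively_mono) auto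
    have "ncomp (set ps) {e\<in>E. e \<subseteq> set ps} = 1"
      apply (rule ncomp_one[of "hd ps"])
      using ne apply simp
      by (intro ballI conn_walk[OF sE order_refl])
    moreover have "card (set ps) \<le> m + 1" using e(3) card_length[of ps] by linarith
    ultimately have hm: "set ps \<in> Hm n E m" unfolding Hm_def mem_Collect_eq using sT(2) by blast
    have "\<exists>h. set ps - S = h - S \<and> h \<in> Hm n E m \<and> h \<subseteq> T" using hm sT(1) by blast
    then have "set ps - S \<in> ?HH" by (simp only: mem_Collect_eq)
    moreover have "x \<in> set ps - S" "y \<in> set ps - S" using p e uv by auto
    ultimately have "(x,y) \<in> hrel (T - S) ?HH" using p(2,3) by (intro hrelI)
    then show "p \<in> (hrel (T - S) ?HH)\<^sup>*" using p by simp
  qed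
  have "(hrel (T - S) ?HH)\<^sup>* = (hrel (T - S) (GG E T S m))\<^sup>*"
    using rtrancl_subset_rtrancl[OF A] rtrancl_subset_rtrancl[OF B] by blast
  then show ?thesis unfolding ncomp_def by (rule arg_cong[where f="\<lambda>r. card ((T - S) // r)"])
qed

theorem mainTheorem2:
  fixes n m :: nat and E :: "nat set set"
  assumes "simple_graph n E"
  shows "Fq_hyp n (Hm n E m) = Psi m n (one_dec n E)"
proof -
  have "hyp_rk n (Hm n E m) Fs = rk_m m n (one_dec n E) Fs" for Fs
    unfolding hyp_rk_def rk_m_def by (simp only: graph_side comp_eq[OF assms])
  then have "hyp_rk n (Hm n E m) = rk_m m n (one_dec n E)" by (rule ext)
  then show ?thesis unfolding Fq_hyp_def Psi_def by (rule arg_cong)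
qed

end
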